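(* Let $k\ge2$, $n=2^k-1$. The binary simplex $(n,k)$ code has the Easy Repair Property.
   Context: The binary simplex $(n,k)$ code has generator matrix $G\in\mathbb F_2^{k\times n}$ whose columns $g_1,\dots,g_n$ are all the distinct nonzero vectors of $\mathbb F_2^k$. Nodes are coordinates $c_1,\dots,c_n$ of codewords $c=uG$. An erasure pattern is a set $S^e$ of erased nodes; the others are live. It is correctable if no two distinct codewords coincide on all live positions. A node $c_i$ is related to distinct nodes $c_{j_1},\dots,c_{j_\gamma}$ (all different from $c_i$) if $g_i=g_{j_1}+\dots+g_{j_\gamma}$. An erased node allows for easy repair if it is related to $\gamma\le2$ live nodes. An erasure pattern allows for easy repair if all erased nodes can be recovered by a sequence of easy repairs, where after each step the recovered node is regarded as live. A code has the Easy Repair Property if every correctable erasure pattern allows for easy repair. *)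

theory Defs
  imports "HOL-Library.Z2"
begin

text \<open>A simplex generator is given by its columns g 0, ..., g (n-1), n = 2^k - 1,
  which enumerate all distinct nonzero vectors of F_2^k (in some order).\<close>

definition vecs :: "nat \<Rightarrow> (nat \<Rightarrow> bit) set" where
  "vecs k = {v. \<forall>j\<ge>k. v j = 0}"

definition simplex_len :: "nat \<Rightarrow> nat" where
  "simplex_len k = 2 ^ k - 1"

definition simplex_gen :: "nat \<Rightarrow> (nat \<Rightarrow> nat \<Rightarrow> bit) \<Rightarrow> bool" where
  "simplex_gen k g \<longleftrightarrow> bij_betw g {..<simplex_len k} (vecs k - {\<lambda>_. 0})"

definition codeword :: "nat \<Rightarrow> (nat \<Rightarrow> nat \<Rightarrow> bit) \<Rightarrow> (nat \<Rightarrow> bit) \<Rightarrow> nat \<Rightarrow> bit" where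
  "codeword k g u i = (\<Sum>j<k. u j * g i j)"

definition correctable :: "nat \<Rightarrow> (nat \<Rightarrow> nat \<Rightarrow> bit) \<Rightarrow> nat set \<Rightarrow> bool" where
  "correctable k g E \<longleftrightarrow>
     (\<forall>u\<in>vecs k. \<forall>v\<in>vecs k.
        (\<forall>i<simplex_len k. i \<notin> E \<longrightarrow> codeword k g u i = codeword k g v i) \<longrightarrow>
        (\<forall>i<simplex_len k. codeword k g u i = codeword k g v i))"

definition related :: "nat \<Rightarrow> (nat \<Rightarrow> nat \<Rightarrow> bit) \<Rightarrow> nat \<Rightarrow> nat set \<Rightarrow> bool" where
  "related k g i J \<longleftrightarrow> J \<noteq> {} \<and> J \<subseteq> {..<simplex_len k} \<and> i \<notin> J \<and>
     (\<forall>t. g i t = (\<Sum>j\<in>J. g j t))"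

definition easy_repair_step :: "nat \<Rightarrow> (nat \<Rightarrow> nat \<Rightarrow> bit) \<Rightarrow> nat set \<Rightarrow> nat \<Rightarrow> bool" where
  "easy_repair_step k g L i \<longleftrightarrow> (\<exists>J. related k g i J \<and> card J \<le> 2 \<and> J \<subseteq> L)"

definition allows_easy_repair :: "nat \<Rightarrow> (nat \<Rightarrow> nat \<Rightarrow> bit) \<Rightarrow> nat set \<Rightarrow> bool" where
  "allows_easy_repair k g E \<longleftrightarrow>
     (\<exists>xs. distinct xs \<and> set xs = E \<and>
        (\<forall>m<length xs. easy_repair_step k g
            (({..<simplex_len k} - E) \<union> set (take m xs)) (xs ! m)))"

definition easy_repair_property :: "nat \<Rightarrow> (nat \<Rightarrow> nat \<Rightarrow> bit) \<Rightarrow> bool" where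
  "easy_repair_property k g \<longleftrightarrow>
     (\<forall>E. E \<subseteq> {..<simplex_len k} \<longrightarrow> correctable k g E \<longrightarrow> allows_easy_repair k g E)"

end

theory Submission imports Defs begin

lemma bit_cases2: "(x::bit) = 0 \<or> x = 1" by (cases "x = 0") auto
lemma bit_add_self[simp]: "(x::bit) + x = 0" using bit_cases2[of x] by auto

lemma vecs_SucD: assumes "x \<in> vecs (Suc k)" "x k = 0" shows "x \<in> vecs k"
  unfolding vecs_def
proof (intro CollectI allI impI)
  fix j assume "k \<le> j"
  then have "j = k \<or> Suc k \<le> j" by linarith
  then show "x j = 0" using assms unfolding vecs_def by auto
qed

definition dotp :: "nat \<Rightarrow> (nat \<Rightarrow> bit) \<Rightarrow> (nat \<Rightarrow> bit) \<Rightarrow> bit" where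
  "dotp k u x = (\<Sum>j<k. u j * x j)"

lemma perp_exists:
  "W \<subseteq> vecs k \<Longrightarrow> (\<lambda>_. 0) \<in> W \<Longrightarrow> (\<And>x y. x \<in> W \<Longrightarrow> y \<in> W \<Longrightarrow> (\<lambda>j. x j + y j) \<in> W)
   \<Longrightarrow> v \<in> vecs k \<Longrightarrow> v \<notin> W \<Longrightarrow> \<exists>u\<in>vecs k. u \<noteq> (\<lambda>_. 0) \<and> (\<forall>x\<in>W. dotp k u x = 0)"
proof (induction k arbitrary: W v)
  case 0
  then have "v = (\<lambda>_. 0)" by (auto simp: vecs_def)
  then show ?case using 0 by auto
next
  case (Suc k)
  show ?case
  proof (cases "\<forall>x\<in>W. x k = 0")
    case True
    define u where "u = (\<lambda>j. if j = k then (1::bit) else 0)"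
    have "dotp (Suc k) u x = x k" for x
      unfolding dotp_def u_def by (simp add: if_distrib cong: if_cong)
    moreover have "u \<in> vecs (Suc k)" "u \<noteq> (\<lambda>_. 0)" unfolding u_def vecs_def by (auto dest: fun_cong[of _ _ k])
    ultimately show ?thesis using True by auto
  next
    case False
    then obtain w0 where w0: "w0 \<in> W" "w0 k = 1" using bit_cases2 by blast
    define W' where "W' = {x\<in>W. x k = 0}"
    have W'v: "W' \<subseteq> vecs k"
    proof
      fix x assume "x \<in> W'"
      then have "x \<in> vecs (Suc k)" "x k = 0" using Suc.prems(1) by (auto simp: W'_def)
      then show "x \<in> vecs k" by (rule vecs_SucD)
    qed
    have W'0: "(\<lambda>_. 0) \<in> W'" using Suc.prems(2) by (auto simp: W'_def)
    have W'c: "(\<lambda>j. x j + y j) \<in> W'" if "x \<in> W'" "y \<in> W'" for x y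
      using that Suc.prems(3) by (auto simp: W'_def)
    obtain v' where v': "v' \<in> vecs k" "v' \<notin> W'"
    proof (cases "v k = 0")
      case True
      then have "v \<in> vecs k" using Suc.prems(4) vecs_SucD by blast
      then show ?thesis using that Suc.prems(5) by (auto simp: W'_def)
    next
      case False
      then have vk: "v k = 1" using bit_cases2 by blast
      let ?z = "\<lambda>j. v j + w0 j"
      have zS: "?z \<in> vecs (Suc k)" using Suc.prems(4) Suc.prems(1) w0
        by (auto simp: vecs_def subset_iff)
      have "?z \<in> vecs k" using vecs_SucD[OF zS] vk w0 by simp
      moreover have "?z \<notin> W"
      proof
        assume "?z \<in> W"
        from Suc.prems(3)[OF this w0(1)] have "(\<lambda>j. v j + w0 j + w0 j) \<in> W" .
        moreover have "(\<lambda>j. v j + w0 j + w0 j) = v" by (simp only: add.assoc bit_add_self add_0_right)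
        ultimately have "v \<in> W" by simp
        then show False using Suc.prems(5) by simp
      qed
      ultimately show ?thesis using that by (auto simp: W'_def)
    qed
    from Suc.IH[OF W'v W'0 W'c v'] obtain u' where u': "u' \<in> vecs k" "u' \<noteq> (\<lambda>_. 0)"
      "\<forall>x\<in>W'. dotp k u' x = 0" by blast
    define u where "u = u'(k := dotp k u' w0)"
    have du: "dotp (Suc k) u x = dotp k u' x + dotp k u' w0 * x k" for x
      unfolding dotp_def u_def by (simp add: sum.cong[of "{..<k}" _ "\<lambda>j. (u'(k := _)) j * x j" "\<lambda>j. u' j * x j"])
    have uv: "u \<in> vecs (Suc k)" using u' unfolding u_def vecs_def by auto
    have un: "u \<noteq> (\<lambda>_. 0)"
    proof
      assume u0: "u = (\<lambda>_. 0)"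
      obtain j where "u' j \<noteq> 0" using u'(2) by (meson ext)
      moreover have "j < k" using u'(1) calculation by (auto simp: vecs_def not_less[symmetric])
      ultimately show False using fun_cong[OF u0, of j] unfolding u_def by simp
    qed
    have "dotp (Suc k) u x = 0" if x: "x \<in> W" for x
    proof (cases "x k = 0")
      case True
      then show ?thesis using du u'(3) x by (auto simp: W'_def)
    next
      case False
      then have xk: "x k = 1" using bit_cases2 by blast
      have "(\<lambda>j. x j + w0 j) \<in> W'" using Suc.prems(3)[OF x w0(1)] xk w0 by (auto simp: W'_def)
      then have "dotp k u' (\<lambda>j. x j + w0 j) = 0" using u'(3) by auto
      moreover have "dotp k u' (\<lambda>j. x j + w0 j) = dotp k u' x + dotp k u' w0"
        unfolding dotp_def by (simp only: distrib_left sum.distrib)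
      ultimately show ?thesis using du[of x] xk by (simp only: mult_1_right)
    qed
    then show ?thesis using uv un by blast
  qed
qed

declare add_bit_eq_xor[simp del] mult_bit_eq_and[simp del]

lemma bit_sum0: "(a::bit) + b = 0 \<Longrightarrow> a = b"
  using bit_cases2[of a] bit_cases2[of b] by auto
lemma bit_sum_self: "(a::bit) = a + b \<Longrightarrow> b = 0"
  using bit_cases2[of a] bit_cases2[of b] by auto
lemma bit_sum_self2: "(b::bit) = a + b \<Longrightarrow> a = 0"
  using bit_cases2[of a] bit_cases2[of b] by auto

lemma zero_vecs: "(\<lambda>_. 0) \<in> vecs k" by (simp add: vecs_def)

lemma correctable_mono: "E' \<subseteq> E \<Longrightarrow> correctable k g E \<Longrightarrow> correctable k g E'"
  unfolding correctable_def by blast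

lemma exists_step:
  assumes sg: "simplex_gen k g" and E: "E \<subseteq> {..<simplex_len k}" "E \<noteq> {}"
    and c: "correctable k g E"
  shows "\<exists>i\<in>E. easy_repair_step k g ({..<simplex_len k} - E) i"
proof (rule ccontr)
  assume nst: "\<not> ?thesis"
  define n where "n = simplex_len k"
  define L where "L = {..<n} - E"
  have bij: "bij_betw g {..<n} (vecs k - {\<lambda>_. 0})" using sg by (simp add: simplex_gen_def n_def)
  have inj: "inj_on g {..<n}" using bij by (simp add: bij_betw_def)
  have gv: "g i \<in> vecs k" "g i \<noteq> (\<lambda>_. 0)" if "i < n" for i
    using bij that by (auto simp: bij_betw_def)
  have gs: "\<exists>c<n. g c = v" if "v \<in> vecs k" "v \<noteq> (\<lambda>_. 0)" for v
  proof -
    have "v \<in> g ` {..<n}" using bij that by (simp add: bij_betw_def)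
    then show ?thesis by auto
  qed
  define W where "W = insert (\<lambda>_. 0) (g ` L)"
  have Wv: "W \<subseteq> vecs k" using gv zero_vecs by (auto simp: W_def L_def)
  have W0: "(\<lambda>_. 0) \<in> W" by (simp add: W_def)
  have Wc: "(\<lambda>j. x j + y j) \<in> W" if x: "x \<in> W" and y: "y \<in> W" for x y
  proof -
    consider "x = (\<lambda>_. 0)" | "y = (\<lambda>_. 0)" | "x = y"
      | a b where "a \<in> L" "b \<in> L" "x = g a" "y = g b" "x \<noteq> y"
      using x y by (auto simp: W_def)
    then show ?thesis
    proof cases
      case 1 then show ?thesis using y by simp
    next
      case 2 then show ?thesis using x by simp
    next
      case 3
      then have "(\<lambda>j. x j + y j) = (\<lambda>_. 0)" by (simp only: bit_add_self)
      then show ?thesis using W0 by simp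
    next
      case 4
      then have ab: "a \<noteq> b" by auto
      have an: "a < n" "b < n" using 4 by (auto simp: L_def)
      define s where "s = (\<lambda>j. g a j + g b j)"
      have sv: "s \<in> vecs k" using gv[OF an(1)] gv[OF an(2)] by (simp add: vecs_def s_def)
      have s0: "s \<noteq> (\<lambda>_. 0)"
      proof
        assume s0: "s = (\<lambda>_. 0)"
        have "g a j = g b j" for j using bit_sum0[of "g a j" "g b j"] fun_cong[OF s0, of j] by (simp add: s_def)
        then show False using 4 by auto
      qed
      obtain c where c: "c < n" "g c = s" using gs[OF sv s0] by blast
      show ?thesis
      proof (cases "c \<in> L")
        case True
        then have "s \<in> g ` L" using c by (metis image_eqI)
        then show ?thesis using 4 by (simp add: W_def s_def)
      next
        case False
        then have cE: "c \<in> E" using c by (auto simp: L_def)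
        have "c \<noteq> a"
        proof
          assume "c = a"
          then have "g b j = 0" for j using bit_sum_self[of "g a j" "g b j"] fun_cong[OF c(2), of j] by (simp add: s_def)
          then show False using gv(2)[OF an(2)] by auto
        qed
        moreover have "c \<noteq> b"
        proof
          assume "c = b"
          then have "g a j = 0" for j using bit_sum_self2[of "g b j" "g a j"] fun_cong[OF c(2), of j] by (simp add: s_def)
          then show False using gv(2)[OF an(1)] by auto
        qed
        ultimately have "related k g c {a, b}"
          unfolding related_def using an c ab by (auto simp: n_def s_def)
        moreover have "card {a, b} \<le> 2" by (simp add: card_insert_if)
        moreover have "{a, b} \<subseteq> {..<simplex_len k} - E" using 4 by (auto simp: L_def n_def)
        ultimately show ?thesis using nst cE unfolding easy_repair_step_def by blast
      qed
    qed
  qed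
  obtain i where iE: "i \<in> E" using E(2) by blast
  have iN: "i < n" using iE E(1) by (auto simp: n_def)
  have giW: "g i \<notin> W"
  proof
    assume "g i \<in> W"
    then obtain l where "l \<in> L" "g i = g l" using gv(2)[OF iN] by (auto simp: W_def)
    then show False using inj iN iE by (auto simp: L_def inj_on_def)
  qed
  obtain u where u: "u \<in> vecs k" "u \<noteq> (\<lambda>_. 0)" "\<forall>x\<in>W. dotp k u x = 0"
    using perp_exists[OF Wv W0 Wc gv(1)[OF iN] giW] by blast
  have cw0: "codeword k g (\<lambda>_. 0) i = 0" for i by (simp add: codeword_def)
  have "\<forall>i<simplex_len k. i \<notin> E \<longrightarrow> codeword k g u i = codeword k g (\<lambda>_. 0) i"
  proof (intro allI impI)
    fix i assume "i < simplex_len k" "i \<notin> E"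
    then have "g i \<in> W" by (auto simp: W_def L_def n_def)
    then show "codeword k g u i = codeword k g (\<lambda>_. 0) i"
      using u(3) by (simp add: cw0 codeword_def dotp_def)
  qed
  then have "\<forall>i<simplex_len k. codeword k g u i = codeword k g (\<lambda>_. 0) i"
    using c u(1) zero_vecs[of k] unfolding correctable_def by blast
  then have all: "\<forall>i<n. codeword k g u i = 0" by (simp only: cw0 n_def)
  obtain j where uj: "u j \<noteq> 0" using u(2) by (meson ext)
  have jk: "j < k" using u(1) uj by (auto simp: vecs_def not_less[symmetric])
  define e where "e = (\<lambda>t. if t = j then (1::bit) else 0)"
  have ev: "e \<in> vecs k" using jk by (auto simp: vecs_def e_def)
  have e0: "e \<noteq> (\<lambda>_. 0)" unfolding e_def by (metis one_neq_zero)
  obtain c where c: "c < n" "g c = e" using gs[OF ev e0] by blast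
  have "codeword k g u c = u j" unfolding codeword_def c(2) e_def using jk
    by (simp add: if_distrib cong: if_cong)
  then show False using all c(1) uj by simp
qed

lemma main:
  "finite E \<Longrightarrow> simplex_gen k g \<Longrightarrow> E \<subseteq> {..<simplex_len k} \<Longrightarrow> correctable k g E
   \<Longrightarrow> allows_easy_repair k g E"
proof (induction E rule: finite_psubset_induct)
  case (psubset E)
  show ?case
  proof (cases "E = {}")
    case True
    then show ?thesis unfolding allows_easy_repair_def by (intro exI[of _ "[]"]) simp
  next
    case False
    obtain i where iE: "i \<in> E" and st: "easy_repair_step k g ({..<simplex_len k} - E) i"
      using exists_step[OF psubset(3) psubset(4) False psubset(5)] by blast
    define E' where "E' = E - {i}"
    have "E' \<subset> E" using iE by (auto simp: E'_def)
    moreover have "correctable k g E'" using correctable_mono[OF _ psubset(5), of E'] by (auto simp: E'_def)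
    ultimately have "allows_easy_repair k g E'" using psubset by (auto simp: E'_def)
    then obtain xs where xs: "distinct xs" "set xs = E'"
      "\<forall>m<length xs. easy_repair_step k g (({..<simplex_len k} - E') \<union> set (take m xs)) (xs ! m)"
      unfolding allows_easy_repair_def by blast
    have "\<forall>m<length (i # xs). easy_repair_step k g (({..<simplex_len k} - E) \<union> set (take m (i # xs))) ((i # xs) ! m)"
    proof (intro allI impI)
      fix m assume m: "m < length (i # xs)"
      show "easy_repair_step k g (({..<simplex_len k} - E) \<union> set (take m (i # xs))) ((i # xs) ! m)"
      proof (cases m)
        case 0 then show ?thesis using st by simp
      next
        case (Suc m')
        have "({..<simplex_len k} - E) \<union> set (take m (i # xs)) = ({..<simplex_len k} - E') \<union> set (take m' xs)"
          using Suc iE psubset(4) by (auto simp: E'_def)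
        then show ?thesis using xs(3) Suc m by simp
      qed
    qed
    moreover have "distinct (i # xs)" "set (i # xs) = E" using xs iE by (auto simp: E'_def)
    ultimately show ?thesis unfolding allows_easy_repair_def by blast
  qed
qed

theorem theorem3p2:
  fixes k :: nat and g :: "nat \<Rightarrow> nat \<Rightarrow> bit"
  assumes "k \<ge> 2" and "simplex_gen k g"
  shows "easy_repair_property k g"
  unfolding easy_repair_property_def
  using main[OF _ assms(2)] finite_subset[OF _ finite_lessThan] by blast

end
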